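(* Let $X\subset U\subset\mathbb{R}^n$, where $U$ is open and $X$ is closed in $U$. Let $f:X\to\mathbb{R}$, let $p\in\mathbb{N}$, and suppose there is a $\mathcal{C}^p$ Whitney field $F=(F^\alpha)_{|\alpha|\le p}$ on $X$ with $F^0=f$. Then for each $i\in\mathbb{N}$, $\rho^i(\Phi_0)$ is the graph of a function $\rho^i(E_0)\to\mathbb{R}$ (i.e. for each $a\in X$ and $\xi\in\rho^i(E_0)_a$ there is exactly one $\lambda$ with $(a,\xi,\lambda)\in\rho^i(\Phi_0)$), and if $a\in X$ and $\xi\in\rho^i(E_0)_a$, then the value of this function at $\xi$ equals $\xi(T^p_aF)=\xi(F,a)$.
   Context: $\mathcal{P}_p$: real polynomials on $\mathbb{R}^n$ of degree $\le p$; $\mathcal{P}_p^*$ its dual. For $\xi\in\mathcal{P}_p^*$, $b\in\mathbb{R}^n$, $|\alpha|\le p$: $\xi_\alpha(b):=\xi(\tfrac1{\alpha!}(x-b)^\alpha)$; $\delta_a(P)=P(a)$. A bundle over $X$ with fibres in $W$ is a subset of $X\times W$ whose fibres are linear subspaces. For a bundle $E\subset X\times\mathcal{P}_p^*$: $\Delta E=\{(a,b,\xi+\eta):a,b\in X,\xi\in E_a,\eta\in E_b,|a-b|^{p-|\alpha|}|\eta_\alpha(b)|\le1\ \forall|\alpha|\le p\}$, $E'=\{(a,\xi):(a,a,\xi)\in\overline{\Delta E}\}$ (closure in $X\times X\times\mathcal{P}_p^*$), $\rho(E)=\{(a,\xi):\xi\in\operatorname{Span}E'_a\}$. For a bundle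 $\Phi\subset X\times(\mathcal{P}_p^*\times\mathbb{R})$: $\Delta\Phi=\{(a,b,\xi+\eta,\lambda+\mu):a,b\in X,(\xi,\lambda)\in\Phi_a,(\eta,\mu)\in\Phi_b,|a-b|^{p-|\alpha|}|\eta_\alpha(b)|\le1\ \forall|\alpha|\le p\}$, $\Phi'=\{(a,\xi,\lambda):(a,a,\xi,\lambda)\in\overline{\Delta\Phi}\}$, $\rho(\Phi)=\{(a,v):v\in\operatorname{Span}\Phi'_a\}$. $E_0=\{(a,\lambda\delta_a):a\in X,\lambda\in\mathbb{R}\}$, $\Phi_0=\{(a,\lambda\delta_a,\lambda f(a)):a\in X,\lambda\in\mathbb{R}\}$. For $F=(F^\alpha)_{|\alpha|\le p}$, $F^\alpha:X\to\mathbb{R}$: $T^p_aF(x)=\sum_{|\alpha|\le p}\frac1{\alpha!}F^\alpha(a)(x-a)^\alpha$, $\xi(F,a)=\xi(T^p_aF)$, and $\delta_\alpha(a,b)=\big(F^\alpha(b)-\sum_{|\beta|\le p-|\alpha|}\frac1{\beta!}F^{\alpha+\beta}(a)(b-a)^\beta\big)/|b-a|^{p-|\alpha|}$; $F$ is a $\mathcal{C}^p$ Whitney field if for every $c\in X$, $|\alpha|\le p$, $\delta_\alpha(a,b)\to0$ as $a,b\to c$ in $X$, $a\ne b$. *)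

theory Defs
  imports "HOL-Analysis.Analysis"
begin

text \<open>A polynomial of degree <= p is represented by its coefficient function
  (coefficient of the monomial x^alpha), and an element xi of the dual space
  P_p^* is represented by its values on the monomials, xi alpha = xi(x^alpha),
  with xi alpha = 0 whenever |alpha| > p.  Then xi(P) = sum of c alpha * xi alpha.\<close>

type_synonym 'n mindex = "'n \<Rightarrow> nat"
type_synonym 'n dualp = "'n mindex \<Rightarrow> real"

definition mdeg :: "'n::finite mindex \<Rightarrow> nat" where
  "mdeg \<alpha> = (\<Sum>i\<in>UNIV. \<alpha> i)"

definition Mon :: "nat \<Rightarrow> 'n::finite mindex set" where
  "Mon p = {\<alpha>. mdeg \<alpha> \<le> p}"

definition mfact :: "'n::finite mindex \<Rightarrow> real" where
  "mfact \<alpha> = (\<Prod>i\<in>UNIV. fact (\<alpha> i))"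

definition mpow :: "real^'n::finite \<Rightarrow> 'n mindex \<Rightarrow> real" where
  "mpow x \<alpha> = (\<Prod>i\<in>UNIV. (x $ i) ^ (\<alpha> i))"

definition Dual :: "nat \<Rightarrow> ('n::finite) dualp set" where
  "Dual p = {\<xi>. \<forall>\<alpha>. \<alpha> \<notin> Mon p \<longrightarrow> \<xi> \<alpha> = 0}"

definition dapp :: "nat \<Rightarrow> ('n::finite) dualp \<Rightarrow> ('n mindex \<Rightarrow> real) \<Rightarrow> real" where
  "dapp p \<xi> c = (\<Sum>\<beta>\<in>Mon p. c \<beta> * \<xi> \<beta>)"

text \<open>Coefficients of the polynomial (x-b)^alpha / alpha!.\<close>
definition shiftmon :: "real^'n::finite \<Rightarrow> 'n mindex \<Rightarrow> 'n mindex \<Rightarrow> real" where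
  "shiftmon b \<alpha> \<beta> =
     (if (\<forall>i. \<beta> i \<le> \<alpha> i)
      then (\<Prod>i\<in>UNIV. real (\<alpha> i choose \<beta> i) * (- (b $ i)) ^ (\<alpha> i - \<beta> i)) / mfact \<alpha>
      else 0)"

definition dcomp :: "nat \<Rightarrow> ('n::finite) dualp \<Rightarrow> 'n mindex \<Rightarrow> real^'n \<Rightarrow> real" where
  "dcomp p \<xi> \<alpha> b = dapp p \<xi> (shiftmon b \<alpha>)"

definition deltaP :: "nat \<Rightarrow> real^'n::finite \<Rightarrow> 'n dualp" where
  "deltaP p a = (\<lambda>\<alpha>. if \<alpha> \<in> Mon p then mpow a \<alpha> else 0)"

definition spanD :: "('n::finite) dualp set \<Rightarrow> 'n dualp set" where
  "spanD S = {v. \<exists>I c. finite I \<and> I \<subseteq> S \<and> v = (\<lambda>\<alpha>. \<Sum>u\<in>I. c u * u \<alpha>)}"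

definition spanDR :: "(('n::finite) dualp \<times> real) set \<Rightarrow> ('n dualp \<times> real) set" where
  "spanDR S = {v. \<exists>I c. finite I \<and> I \<subseteq> S \<and>
       v = ((\<lambda>\<alpha>. \<Sum>u\<in>I. c u * fst u \<alpha>), (\<Sum>u\<in>I. c u * snd u))}"

definition small :: "nat \<Rightarrow> real^'n::finite \<Rightarrow> real^'n \<Rightarrow> 'n dualp \<Rightarrow> bool" where
  "small p a b \<eta> \<longleftrightarrow> (\<forall>\<alpha>\<in>Mon p. norm (a - b) ^ (p - mdeg \<alpha>) * \<bar>dcomp p \<eta> \<alpha> b\<bar> \<le> 1)"

definition DeltaE :: "nat \<Rightarrow> (real^'n::finite) set \<Rightarrow> ((real^'n) \<times> 'n dualp) set
    \<Rightarrow> ((real^'n) \<times> (real^'n) \<times> 'n dualp) set" where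
  "DeltaE p X E = {(a, b, \<lambda>\<alpha>. \<xi> \<alpha> + \<eta> \<alpha>) | a b \<xi> \<eta>.
      a \<in> X \<and> b \<in> X \<and> (a, \<xi>) \<in> E \<and> (b, \<eta>) \<in> E \<and> small p a b \<eta>}"

definition primeE :: "nat \<Rightarrow> (real^'n::finite) set \<Rightarrow> ((real^'n) \<times> 'n dualp) set
    \<Rightarrow> ((real^'n) \<times> 'n dualp) set" where
  "primeE p X E = {(a, \<xi>). a \<in> X \<and> \<xi> \<in> Dual p \<and> (a, a, \<xi>) \<in> closure (DeltaE p X E)}"

definition rhoE :: "nat \<Rightarrow> (real^'n::finite) set \<Rightarrow> ((real^'n) \<times> 'n dualp) set
    \<Rightarrow> ((real^'n) \<times> 'n dualp) set" where
  "rhoE p X E = {(a, \<xi>). a \<in> X \<and> \<xi> \<in> spanD {\<zeta>. (a, \<zeta>) \<in> primeE p X E}}"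

definition DeltaPhi :: "nat \<Rightarrow> (real^'n::finite) set \<Rightarrow> ((real^'n) \<times> ('n dualp \<times> real)) set
    \<Rightarrow> ((real^'n) \<times> (real^'n) \<times> ('n dualp \<times> real)) set" where
  "DeltaPhi p X \<Phi> = {(a, b, (\<lambda>\<alpha>. \<xi> \<alpha> + \<eta> \<alpha>), l + m) | a b \<xi> l \<eta> m.
      a \<in> X \<and> b \<in> X \<and> (a, \<xi>, l) \<in> \<Phi> \<and> (b, \<eta>, m) \<in> \<Phi> \<and> small p a b \<eta>}"

definition primePhi :: "nat \<Rightarrow> (real^'n::finite) set \<Rightarrow> ((real^'n) \<times> ('n dualp \<times> real)) set
    \<Rightarrow> ((real^'n) \<times> ('n dualp \<times> real)) set" where
  "primePhi p X \<Phi> = {(a, \<xi>, l). a \<in> X \<and> \<xi> \<in> Dual p \<and> (a, a, \<xi>, l) \<in> closure (DeltaPhi p X \<Phi>)}"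

definition rhoPhi :: "nat \<Rightarrow> (real^'n::finite) set \<Rightarrow> ((real^'n) \<times> ('n dualp \<times> real)) set
    \<Rightarrow> ((real^'n) \<times> ('n dualp \<times> real)) set" where
  "rhoPhi p X \<Phi> = {(a, v). a \<in> X \<and> v \<in> spanDR {w. (a, w) \<in> primePhi p X \<Phi>}}"

definition E0 :: "nat \<Rightarrow> (real^'n::finite) set \<Rightarrow> ((real^'n) \<times> 'n dualp) set" where
  "E0 p X = {(a, \<lambda>\<alpha>. c * deltaP p a \<alpha>) | a c. a \<in> X}"

definition Phi0 :: "nat \<Rightarrow> (real^'n::finite) set \<Rightarrow> (real^'n \<Rightarrow> real)
    \<Rightarrow> ((real^'n) \<times> ('n dualp \<times> real)) set" where
  "Phi0 p X f = {(a, (\<lambda>\<alpha>. c * deltaP p a \<alpha>), c * f a) | a c. a \<in> X}"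

text \<open>Coefficients of the Taylor polynomial T^p_a F = sum F^alpha(a)/alpha! (x-a)^alpha.\<close>
definition taylor :: "nat \<Rightarrow> ('n::finite mindex \<Rightarrow> real^'n \<Rightarrow> real) \<Rightarrow> real^'n
    \<Rightarrow> ('n mindex \<Rightarrow> real)" where
  "taylor p F a = (\<lambda>\<beta>. \<Sum>\<alpha>\<in>Mon p. F \<alpha> a * shiftmon a \<alpha> \<beta>)"

definition whitney_rem :: "nat \<Rightarrow> ('n::finite mindex \<Rightarrow> real^'n \<Rightarrow> real) \<Rightarrow> 'n mindex
    \<Rightarrow> real^'n \<Rightarrow> real^'n \<Rightarrow> real" where
  "whitney_rem p F \<alpha> a b =
     (F \<alpha> b - (\<Sum>\<beta>\<in>Mon (p - mdeg \<alpha>). F (\<lambda>i. \<alpha> i + \<beta> i) a * mpow (b - a) \<beta> / mfact \<beta>))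
     / norm (b - a) ^ (p - mdeg \<alpha>)"

definition whitney_field :: "nat \<Rightarrow> (real^'n::finite) set \<Rightarrow> ('n mindex \<Rightarrow> real^'n \<Rightarrow> real) \<Rightarrow> bool" where
  "whitney_field p X F \<longleftrightarrow> (\<forall>c\<in>X. \<forall>\<alpha>\<in>Mon p.
     ((\<lambda>(a, b). whitney_rem p F \<alpha> a b) \<longlongrightarrow> 0)
       (at (c, c) within {(a, b). a \<in> X \<and> b \<in> X \<and> a \<noteq> b}))"

end

theory Submission
  imports Defs "HOL-Computational_Algebra.Polynomial"
begin

lemma finite_Mon: "finite (Mon p :: ('n::finite) mindex set)"
proof -
  have "Mon p \<subseteq> PiE UNIV (\<lambda>_::'n. {..p})"
  proof
    fix \<alpha> :: "'n mindex" assume "\<alpha> \<in> Mon p"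
    have "\<alpha> i \<le> mdeg \<alpha>" for i unfolding mdeg_def by (rule member_le_sum) auto
    hence "\<forall>i. \<alpha> i \<le> p" using \<open>\<alpha> \<in> Mon p\<close> unfolding Mon_def
      using order_trans by blast
    thus "\<alpha> \<in> PiE UNIV (\<lambda>_::'n. {..p})" by (auto simp: PiE_def Pi_def)
  qed
  moreover have "finite (PiE UNIV (\<lambda>_::'n. {..p}))" by (rule finite_PiE) auto
  ultimately show ?thesis by (rule finite_subset)
qed

lemma mdeg_add: "mdeg (\<lambda>i. \<alpha> i + \<beta> i) = mdeg \<alpha> + mdeg (\<beta>::('n::finite) mindex)"
  unfolding mdeg_def by (simp add: sum.distrib)

lemma mdeg_le: "(\<forall>i. \<beta> i \<le> \<alpha> i) \<Longrightarrow> mdeg \<beta> \<le> mdeg (\<alpha>::('n::finite) mindex)"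
  unfolding mdeg_def by (simp add: sum_mono)

definition s1 :: "real \<Rightarrow> nat \<Rightarrow> nat \<Rightarrow> real" where
  "s1 t m k = (if k \<le> m then real (m choose k) * (- t) ^ (m - k) / fact m else 0)"

lemma shiftmon_prod: "shiftmon b \<alpha> \<beta> = (\<Prod>i\<in>UNIV. s1 (b$i) (\<alpha> i) (\<beta> i))"
proof (cases "\<forall>i. \<beta> i \<le> \<alpha> i")
  case True
  thus ?thesis unfolding shiftmon_def s1_def mfact_def
    by (simp add: prod_dividef)
next
  case False
  then obtain j where "\<not> \<beta> j \<le> \<alpha> j" by auto
  hence "(\<Prod>i\<in>UNIV. s1 (b$i) (\<alpha> i) (\<beta> i)) = 0"
    by (intro prod_zero) (auto simp: s1_def)
  moreover have "shiftmon b \<alpha> \<beta> = 0" unfolding shiftmon_def by (simp only: False if_False)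
  ultimately show ?thesis by simp
qed

lemma s1_coeff: "s1 t m k = coeff ([:-t,1:]^m) k / fact m"
proof (cases "k \<le> m")
  case True thus ?thesis by (simp add: s1_def coeff_linear_poly_power)
next
  case False
  hence "coeff ([:-t,1:]^m) k = 0"
    by (intro coeff_eq_0) (simp add: degree_linear_power)
  thus ?thesis using False by (simp add: s1_def)
qed

lemma s1_shift: "s1 a g k = (\<Sum>m\<le>g. (b-a)^(g-m)/fact(g-m) * s1 b m k)"
proof -
  have "[:-a,1:]^g = ([:-b,1:] + [:b-a:])^g" by simp
  also have "\<dots> = (\<Sum>m\<le>g. of_nat (g choose m) * [:-b,1:]^m * [:b-a:]^(g-m))"
    by (rule binomial_ring)
  finally have "coeff ([:-a,1:]^g) k = (\<Sum>m\<le>g. real (g choose m) * coeff ([:-b,1:]^m) k * (b-a)^(g-m))"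
    by (simp add: coeff_sum of_nat_poly poly_const_pow mult_ac)
  hence "s1 a g k = (\<Sum>m\<le>g. real (g choose m) * coeff ([:-b,1:]^m) k * (b-a)^(g-m)) / fact g"
    by (simp add: s1_coeff)
  also have "\<dots> = (\<Sum>m\<le>g. (b-a)^(g-m)/fact(g-m) * s1 b m k)"
    unfolding sum_divide_distrib
  proof (rule sum.cong)
    fix m assume "m \<in> {..g}"
    hence "m \<le> g" by simp
    hence "real (g choose m) = fact g / (fact m * fact (g - m))"
      by (simp add: binomial_fact)
    thus "real (g choose m) * coeff ([:-b,1:]^m) k * (b-a)^(g-m) / fact g =
        (b-a)^(g-m)/fact(g-m) * s1 b m k"
      by (simp add: s1_coeff field_simps)
  qed simp
  finally show ?thesis .
qed

lemma s1_eval: "(\<Sum>k\<le>m. s1 t m k * x^k) = (x-t)^m / fact m"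
proof -
  have "(x-t)^m = (x + (-t))^m" by simp
  also have "\<dots> = (\<Sum>k\<le>m. real (m choose k) * x^k * (-t)^(m-k))" by (rule binomial_ring)
  finally show ?thesis unfolding s1_def
    by (simp add: sum_divide_distrib mult_ac)
qed

lemma box_PiE: "{\<alpha>::('n::finite) mindex. \<forall>i. \<alpha> i \<le> \<gamma> i} = PiE UNIV (\<lambda>i. {..\<gamma> i})"
  by (auto simp: PiE_def Pi_def)

lemma finite_box: "finite {\<alpha>::('n::finite) mindex. \<forall>i. \<alpha> i \<le> \<gamma> i}"
  unfolding box_PiE by (rule finite_PiE) auto

lemma shiftmon_shift:
  "shiftmon a \<gamma> \<beta> = (\<Sum>\<alpha>\<in>{\<alpha>::('n::finite) mindex. \<forall>i. \<alpha> i \<le> \<gamma> i}.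
      mpow (b-a) (\<lambda>i. \<gamma> i - \<alpha> i) / mfact (\<lambda>i. \<gamma> i - \<alpha> i) * shiftmon b \<alpha> \<beta>)"
proof -
  have "shiftmon a \<gamma> \<beta> = (\<Prod>i\<in>UNIV. \<Sum>m\<le>\<gamma> i. (b$i-a$i)^(\<gamma> i-m)/fact(\<gamma> i-m) * s1 (b$i) m (\<beta> i))"
    unfolding shiftmon_prod by (intro prod.cong refl s1_shift)
  also have "\<dots> = (\<Sum>\<alpha>\<in>PiE UNIV (\<lambda>i. {..\<gamma> i}). \<Prod>i\<in>UNIV. (b$i-a$i)^(\<gamma> i-\<alpha> i)/fact(\<gamma> i-\<alpha> i) * s1 (b$i) (\<alpha> i) (\<beta> i))"
    by (rule prod_sum_PiE) auto
  also have "\<dots> = (\<Sum>\<alpha>\<in>{\<alpha>::('n::finite) mindex. \<forall>i. \<alpha> i \<le> \<gamma> i}.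
      mpow (b-a) (\<lambda>i. \<gamma> i - \<alpha> i) / mfact (\<lambda>i. \<gamma> i - \<alpha> i) * shiftmon b \<alpha> \<beta>)"
    unfolding box_PiE[symmetric] shiftmon_prod mpow_def mfact_def
    by (intro sum.cong refl)
       (simp only: prod_dividef[symmetric] prod.distrib[symmetric] vector_minus_component)
  finally show ?thesis .
qed

lemma shiftmon_eval:
  "(\<Sum>\<beta>\<in>{\<beta>::('n::finite) mindex. \<forall>i. \<beta> i \<le> \<alpha> i}. shiftmon a \<alpha> \<beta> * mpow x \<beta>) = mpow (x-a) \<alpha> / mfact \<alpha>"
proof -
  have "(\<Sum>\<beta>\<in>{\<beta>::('n::finite) mindex. \<forall>i. \<beta> i \<le> \<alpha> i}. shiftmon a \<alpha> \<beta> * mpow x \<beta>)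
     = (\<Sum>\<beta>\<in>PiE UNIV (\<lambda>i. {..\<alpha> i}). \<Prod>i\<in>UNIV. s1 (a$i) (\<alpha> i) (\<beta> i) * (x$i)^(\<beta> i))"
    unfolding box_PiE shiftmon_prod mpow_def by (simp add: prod.distrib)
  also have "\<dots> = (\<Prod>i\<in>UNIV. \<Sum>k\<le>\<alpha> i. s1 (a$i) (\<alpha> i) k * (x$i)^k)"
    by (rule prod_sum_PiE[symmetric]) auto
  also have "\<dots> = mpow (x-a) \<alpha> / mfact \<alpha>"
    unfolding s1_eval mpow_def mfact_def by (simp add: prod_dividef)
  finally show ?thesis .
qed

lemma mpow_zero: "mpow 0 \<beta> = (if \<beta> = (\<lambda>_. 0) then 1 else 0)"
proof (cases "\<beta> = (\<lambda>_. 0)")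
  case True thus ?thesis by (simp add: mpow_def)
next
  case False
  then obtain j where "\<beta> j \<noteq> 0" by auto
  hence "mpow 0 \<beta> = 0" unfolding mpow_def by (intro prod_zero) auto
  thus ?thesis using False by simp
qed

lemma mfact_zero: "mfact (\<lambda>_. 0) = 1" by (simp add: mfact_def)

lemma zero_Mon: "(\<lambda>_. 0) \<in> Mon p" by (simp add: Mon_def mdeg_def)



lemma box_sub_Mon:
  assumes g: "\<gamma> \<in> Mon p"
  shows "{\<alpha>::('n::finite) mindex. \<forall>i. \<alpha> i \<le> \<gamma> i} \<subseteq> Mon p"
proof
  fix \<alpha> :: "'n mindex" assume "\<alpha> \<in> {\<alpha>. \<forall>i. \<alpha> i \<le> \<gamma> i}"
  hence "mdeg \<alpha> \<le> mdeg \<gamma>" by (intro mdeg_le) simp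
  thus "\<alpha> \<in> Mon p" using g unfolding Mon_def by simp
qed

lemma shiftmon_eval_Mon:
  assumes "\<alpha> \<in> Mon p"
  shows "(\<Sum>\<beta>\<in>Mon p. shiftmon a \<alpha> \<beta> * mpow x \<beta>) = mpow (x-a) (\<alpha>::('n::finite) mindex) / mfact \<alpha>"
proof -
  have "(\<Sum>\<beta>\<in>Mon p. shiftmon a \<alpha> \<beta> * mpow x \<beta>) = (\<Sum>\<beta>\<in>{\<beta>. \<forall>i. \<beta> i \<le> \<alpha> i}. shiftmon a \<alpha> \<beta> * mpow x \<beta>)"
    by (rule sum.mono_neutral_right) (auto simp: finite_Mon box_sub_Mon[OF assms] shiftmon_def)
  thus ?thesis by (simp add: shiftmon_eval)
qed

lemma sum_zero_term:
  "(\<Sum>\<beta>\<in>Mon q. F (\<lambda>i. \<alpha> i + \<beta> i) a * mpow 0 \<beta> / mfact \<beta>) = F (\<alpha>::('n::finite) mindex) a"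
proof -
  have "(\<Sum>\<beta>\<in>Mon q. F (\<lambda>i. \<alpha> i + \<beta> i) a * mpow 0 \<beta> / mfact \<beta>)
      = (\<Sum>\<beta>\<in>Mon q. if \<beta> = (\<lambda>_::'n. 0) then F \<alpha> a else 0)"
    by (rule sum.cong[OF refl]) (auto simp: mpow_zero mfact_zero)
  also have "\<dots> = F \<alpha> a" by (simp add: finite_Mon zero_Mon)
  finally show ?thesis .
qed

lemma dapp_delta_taylor: "dapp p (deltaP p a) (taylor p F a) = F (\<lambda>_. 0) (a::real^'n::finite)"
proof -
  have "dapp p (deltaP p a) (taylor p F a) = (\<Sum>\<beta>\<in>Mon p. (\<Sum>\<alpha>\<in>Mon p. F \<alpha> a * shiftmon a \<alpha> \<beta>) * mpow a \<beta>)"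
    unfolding dapp_def taylor_def deltaP_def by (rule sum.cong) auto
  also have "\<dots> = (\<Sum>\<alpha>\<in>Mon p. F \<alpha> a * (\<Sum>\<beta>\<in>Mon p. shiftmon a \<alpha> \<beta> * mpow a \<beta>))"
    unfolding sum_distrib_right sum_distrib_left by (subst sum.swap) (simp add: mult_ac)
  also have "\<dots> = (\<Sum>\<alpha>\<in>Mon p. F \<alpha> a * (mpow 0 \<alpha> / mfact \<alpha>))"
    by (rule sum.cong) (auto simp: shiftmon_eval_Mon)
  also have "\<dots> = (\<Sum>\<alpha>\<in>Mon p. if \<alpha> = (\<lambda>_::'n. 0) then F (\<lambda>_. 0) a else 0)"
    by (rule sum.cong[OF refl]) (auto simp: mpow_zero mfact_zero)
  also have "\<dots> = F (\<lambda>_. 0) a" by (simp add: finite_Mon zero_Mon)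
  finally show ?thesis .
qed

lemma dapp_taylor: "dapp p \<eta> (taylor p F b) = (\<Sum>\<alpha>\<in>Mon p. F \<alpha> b * dcomp p \<eta> \<alpha> (b::real^'n::finite))"
  unfolding dapp_def taylor_def dcomp_def sum_distrib_right sum_distrib_left
  by (subst sum.swap) (simp add: mult_ac)

lemma dapp_shiftmon:
  "dapp p \<eta> (shiftmon a \<gamma>) = (\<Sum>\<alpha>\<in>{\<alpha>::('n::finite) mindex. \<forall>i. \<alpha> i \<le> \<gamma> i}.
      mpow (b-a) (\<lambda>i. \<gamma> i - \<alpha> i) / mfact (\<lambda>i. \<gamma> i - \<alpha> i) * dcomp p \<eta> \<alpha> b)"
  unfolding dapp_def dcomp_def
  apply (subst shiftmon_shift[of a \<gamma> _ b])
  unfolding sum_distrib_right sum_distrib_left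
  by (subst sum.swap) (simp add: mult_ac)

lemma reindex_sum:
  fixes \<alpha> :: "'n::finite mindex" and F :: "'n mindex \<Rightarrow> real^'n \<Rightarrow> real"
  assumes "\<alpha> \<in> Mon p"
  shows "(\<Sum>\<gamma>\<in>{\<gamma>\<in>Mon p. \<forall>i. \<alpha> i \<le> \<gamma> i}. F \<gamma> a * (mpow d (\<lambda>i. \<gamma> i - \<alpha> i) / mfact (\<lambda>i. \<gamma> i - \<alpha> i)))
       = (\<Sum>\<beta>\<in>Mon (p - mdeg \<alpha>). F (\<lambda>i. \<alpha> i + \<beta> i) a * mpow d \<beta> / mfact (\<beta>::('n::finite) mindex))"
proof (rule sum.reindex_bij_witness[where j = "\<lambda>\<gamma>::'n mindex. (\<lambda>i. \<gamma> i - \<alpha> i)" and i = "\<lambda>\<beta>::'n mindex. (\<lambda>i. \<alpha> i + \<beta> i)"])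
  fix \<gamma> :: "'n mindex" assume g: "\<gamma> \<in> {\<gamma>\<in>Mon p. \<forall>i. \<alpha> i \<le> \<gamma> i}"
  thus "(\<lambda>i. \<alpha> i + (\<gamma> i - \<alpha> i)) = \<gamma>" by auto
  have e: "(\<lambda>i. \<alpha> i + (\<gamma> i - \<alpha> i)) = \<gamma>" using g by auto
  have "mdeg \<alpha> + mdeg (\<lambda>i. \<gamma> i - \<alpha> i) = mdeg \<gamma>" using mdeg_add[of \<alpha> "\<lambda>i. \<gamma> i - \<alpha> i"] e by simp
  thus "(\<lambda>i. \<gamma> i - \<alpha> i) \<in> Mon (p - mdeg \<alpha>)" using g unfolding Mon_def by auto
  show "F (\<lambda>i. \<alpha> i + (\<gamma> i - \<alpha> i)) a * mpow d (\<lambda>i. \<gamma> i - \<alpha> i) / mfact (\<lambda>i. \<gamma> i - \<alpha> i) =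
        F \<gamma> a * (mpow d (\<lambda>i. \<gamma> i - \<alpha> i) / mfact (\<lambda>i. \<gamma> i - \<alpha> i))" using e by simp
next
  fix \<beta> :: "'n mindex" assume b: "\<beta> \<in> Mon (p - mdeg \<alpha>)"
  show "(\<lambda>i. \<alpha> i + \<beta> i - \<alpha> i) = \<beta>" by simp
  show "(\<lambda>i. \<alpha> i + \<beta> i) \<in> {\<gamma> \<in> Mon p. \<forall>i. \<alpha> i \<le> \<gamma> i}"
    using b assms unfolding Mon_def by (auto simp: mdeg_add)
qed

lemma reindex_sum_mult:
  fixes \<alpha> :: "'n::finite mindex" and F :: "'n mindex \<Rightarrow> real^'n \<Rightarrow> real"
  assumes am: "\<alpha> \<in> Mon p"
  shows "(\<Sum>\<gamma>\<in>{\<gamma>\<in>Mon p. \<forall>i. \<alpha> i \<le> \<gamma> i}. F \<gamma> a * (mpow d (\<lambda>i. \<gamma> i - \<alpha> i) / mfact (\<lambda>i. \<gamma> i - \<alpha> i))) * e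
       = (\<Sum>\<beta>\<in>Mon (p - mdeg \<alpha>). F (\<lambda>i. \<alpha> i + \<beta> i) a * mpow d \<beta> / mfact \<beta>) * e"
  by (simp only: reindex_sum[OF am])

lemma dapp_taylor_re:
  "dapp p \<eta> (taylor p F a) = (\<Sum>\<alpha>\<in>Mon p.
     (\<Sum>\<beta>\<in>Mon (p - mdeg \<alpha>). F (\<lambda>i. \<alpha> i + \<beta> i) a * mpow (b-a) \<beta> / mfact \<beta>) * dcomp p \<eta> \<alpha> (b::real^'n::finite))"
proof -
  have "dapp p \<eta> (taylor p F a) = (\<Sum>\<gamma>\<in>Mon p. F \<gamma> a * dapp p \<eta> (shiftmon a \<gamma>))"
    unfolding dapp_taylor dcomp_def ..
  also have "\<dots> = (\<Sum>\<gamma>\<in>Mon p. \<Sum>\<alpha>\<in>Mon p. if (\<forall>i. \<alpha> i \<le> \<gamma> i) then F \<gamma> a * (mpow (b-a) (\<lambda>i. \<gamma> i - \<alpha> i) / mfact (\<lambda>i. \<gamma> i - \<alpha> i)) * dcomp p \<eta> \<alpha> b else 0)"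
  proof (rule sum.cong[OF refl])
    fix \<gamma> :: "'n mindex" assume g: "\<gamma> \<in> Mon p"
    have 1: "{\<alpha>\<in>Mon p. \<forall>i. \<alpha> i \<le> \<gamma> i} = {\<alpha>. \<forall>i. \<alpha> i \<le> \<gamma> i}" using box_sub_Mon[OF g] by auto
    have 2: "(\<Sum>\<alpha>\<in>Mon p. if (\<forall>i. \<alpha> i \<le> \<gamma> i) then F \<gamma> a * (mpow (b-a) (\<lambda>i. \<gamma> i - \<alpha> i) / mfact (\<lambda>i. \<gamma> i - \<alpha> i)) * dcomp p \<eta> \<alpha> b else 0)
        = (\<Sum>\<alpha>\<in>{\<alpha>. \<forall>i. \<alpha> i \<le> \<gamma> i}. F \<gamma> a * (mpow (b-a) (\<lambda>i. \<gamma> i - \<alpha> i) / mfact (\<lambda>i. \<gamma> i - \<alpha> i)) * dcomp p \<eta> \<alpha> b)"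
      by (simp only: sum.inter_filter[OF finite_Mon, symmetric] 1)
    show "F \<gamma> a * dapp p \<eta> (shiftmon a \<gamma>) = (\<Sum>\<alpha>\<in>Mon p. if (\<forall>i. \<alpha> i \<le> \<gamma> i) then F \<gamma> a * (mpow (b-a) (\<lambda>i. \<gamma> i - \<alpha> i) / mfact (\<lambda>i. \<gamma> i - \<alpha> i)) * dcomp p \<eta> \<alpha> b else 0)"
      unfolding 2 dapp_shiftmon[of p \<eta> a \<gamma> b]
      by (simp add: sum_distrib_left mult_ac)
  qed
  also have "\<dots> = (\<Sum>\<alpha>\<in>Mon p. \<Sum>\<gamma>\<in>Mon p. if (\<forall>i. \<alpha> i \<le> \<gamma> i) then F \<gamma> a * (mpow (b-a) (\<lambda>i. \<gamma> i - \<alpha> i) / mfact (\<lambda>i. \<gamma> i - \<alpha> i)) * dcomp p \<eta> \<alpha> b else 0)"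
    by (rule sum.swap)
  also have "\<dots> = (\<Sum>\<alpha>\<in>Mon p. (\<Sum>\<gamma>\<in>{\<gamma>\<in>Mon p. \<forall>i. \<alpha> i \<le> \<gamma> i}. F \<gamma> a * (mpow (b-a) (\<lambda>i. \<gamma> i - \<alpha> i) / mfact (\<lambda>i. \<gamma> i - \<alpha> i))) * dcomp p \<eta> \<alpha> b)"
  proof (rule sum.cong[OF refl])
    fix \<alpha> :: "'n mindex"
    show "(\<Sum>\<gamma>\<in>Mon p. if (\<forall>i. \<alpha> i \<le> \<gamma> i) then F \<gamma> a * (mpow (b-a) (\<lambda>i. \<gamma> i - \<alpha> i) / mfact (\<lambda>i. \<gamma> i - \<alpha> i)) * dcomp p \<eta> \<alpha> b else 0)
        = (\<Sum>\<gamma>\<in>{\<gamma>\<in>Mon p. \<forall>i. \<alpha> i \<le> \<gamma> i}. F \<gamma> a * (mpow (b-a) (\<lambda>i. \<gamma> i - \<alpha> i) / mfact (\<lambda>i. \<gamma> i - \<alpha> i))) * dcomp p \<eta> \<alpha> b"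
      unfolding sum_distrib_right sum.inter_filter[OF finite_Mon] by (rule sum.cong[OF refl]) simp
  qed
  also have "\<dots> = (\<Sum>\<alpha>\<in>Mon p.
     (\<Sum>\<beta>\<in>Mon (p - mdeg \<alpha>). F (\<lambda>i. \<alpha> i + \<beta> i) a * mpow (b-a) \<beta> / mfact \<beta>) * dcomp p \<eta> \<alpha> b)"
  proof (rule sum.cong[OF refl])
    fix \<alpha> :: "'n mindex" assume am: "\<alpha> \<in> Mon p"
    show "(\<Sum>\<gamma>\<in>{\<gamma>\<in>Mon p. \<forall>i. \<alpha> i \<le> \<gamma> i}. F \<gamma> a * (mpow (b-a) (\<lambda>i. \<gamma> i - \<alpha> i) / mfact (\<lambda>i. \<gamma> i - \<alpha> i))) * dcomp p \<eta> \<alpha> b =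
      (\<Sum>\<beta>\<in>Mon (p - mdeg \<alpha>). F (\<lambda>i. \<alpha> i + \<beta> i) a * mpow (b-a) \<beta> / mfact \<beta>) * dcomp p \<eta> \<alpha> b"
      by (rule reindex_sum_mult[OF am])
  qed
  finally show ?thesis .
qed

lemma sum_zero_term':
  "(\<Sum>\<beta>\<in>Mon q. F (\<lambda>i. \<alpha> i + \<beta> i) a * mpow (b - b) \<beta> / mfact \<beta>) = F (\<alpha>::('n::finite) mindex) a"
proof -
  have "b - b = 0" by simp
  thus ?thesis using sum_zero_term[of F \<alpha> a q] by (simp only:)
qed

lemma whitney_rem_same: "whitney_rem p F \<alpha> a a = 0"
proof -
  have "whitney_rem p F \<alpha> a a = (F \<alpha> a - F \<alpha> a) / norm (a - a) ^ (p - mdeg \<alpha>)"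
    unfolding whitney_rem_def sum_zero_term' ..
  thus ?thesis by simp
qed

lemma F_expand:
  "F \<alpha> b = whitney_rem p F \<alpha> c b * norm (b-c)^(p - mdeg \<alpha>)
     + (\<Sum>\<beta>\<in>Mon (p - mdeg \<alpha>). F (\<lambda>i. \<alpha> i + \<beta> i) c * mpow (b-c) \<beta> / mfact (\<beta>::('n::finite) mindex))"
  (is "_ = ?R * ?N + ?S")
proof (cases "b = c")
  case True
  hence "?R = 0" "?S = F \<alpha> b" using whitney_rem_same[of p F \<alpha> c] sum_zero_term'[where F=F and \<alpha>=\<alpha> and a=c and b=c] by simp_all
  thus ?thesis by simp
next
  case False
  hence nz: "?N \<noteq> 0" by simp
  have "?R = (F \<alpha> b - ?S) / ?N" unfolding whitney_rem_def ..
  hence "?R * ?N = F \<alpha> b - ?S" using nz by simp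
  thus ?thesis by simp
qed

lemma dapp_diff:
  "dapp p \<eta> (taylor p F b) - dapp p \<eta> (taylor p F a)
   = (\<Sum>\<alpha>\<in>Mon p. whitney_rem p F \<alpha> a b * norm (b-a)^(p - mdeg \<alpha>) * dcomp p \<eta> \<alpha> (b::real^'n::finite))"
  unfolding dapp_taylor_re[of p \<eta> F a b]
  unfolding dapp_taylor sum_subtractf[symmetric]
proof (rule sum.cong[OF refl])
  fix \<alpha> :: "'n mindex"
  show "F \<alpha> b * dcomp p \<eta> \<alpha> b - (\<Sum>\<beta>\<in>Mon (p - mdeg \<alpha>). F (\<lambda>i. \<alpha> i + \<beta> i) a * mpow (b-a) \<beta> / mfact \<beta>) * dcomp p \<eta> \<alpha> b =
        whitney_rem p F \<alpha> a b * norm (b-a)^(p - mdeg \<alpha>) * dcomp p \<eta> \<alpha> b"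
    (is "?Fb * ?d - ?S * ?d = ?R * ?N * ?d")
  proof -
    have e: "?Fb = ?R * ?N + ?S" by (rule F_expand)
    have "?Fb * ?d - ?S * ?d = (?Fb - ?S) * ?d" by (rule left_diff_distrib[symmetric])
    also have "?Fb - ?S = ?R * ?N" using e by simp
    finally show ?thesis .
  qed
qed



lemma dapp_add: "dapp p (\<lambda>\<alpha>. \<xi> \<alpha> + \<eta> \<alpha>) c = dapp p \<xi> c + dapp p \<eta> (c::('n::finite) mindex \<Rightarrow> real)"
  unfolding dapp_def by (simp add: distrib_left sum.distrib)

lemma dapp_scale: "dapp p (\<lambda>\<alpha>. r * \<xi> \<alpha>) c = r * dapp p \<xi> (c::('n::finite) mindex \<Rightarrow> real)"
  unfolding dapp_def by (simp add: sum_distrib_left mult_ac)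

lemma dapp_lincomb:
  "dapp p (\<lambda>\<alpha>. \<Sum>u\<in>I. r u * u \<alpha>) T = (\<Sum>u\<in>I. r u * dapp p u (T::('n::finite) mindex \<Rightarrow> real))"
  unfolding dapp_def sum_distrib_left sum_distrib_right
  by (subst sum.swap) (simp add: mult_ac)

lemma coord_tendsto:
  fixes Z :: "'a \<Rightarrow> ('n::finite mindex \<Rightarrow> real)"
  assumes "(Z \<longlongrightarrow> \<xi>) F"
  shows "((\<lambda>k. Z k \<beta>) \<longlongrightarrow> (\<xi> \<beta> :: real)) F"
proof -
  have "continuous_on UNIV (\<lambda>x::'n mindex \<Rightarrow> real. x \<beta>)" by (rule continuous_on_product_coordinates)
  hence "isCont (\<lambda>x. x \<beta>) \<xi>" using continuous_on_eq_continuous_at[OF open_UNIV] by blast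
  thus ?thesis using assms by (rule isCont_tendsto_compose)
qed

lemma mpow_tendsto: "(f \<longlongrightarrow> x) F \<Longrightarrow> ((\<lambda>k. mpow (f k) \<beta>) \<longlongrightarrow> mpow x \<beta>) F"
  unfolding mpow_def by (intro tendsto_prod tendsto_power tendsto_vec_nth)

lemma s1_tendsto: "(g \<longlongrightarrow> t) F \<Longrightarrow> ((\<lambda>k. s1 (g k) m j) \<longlongrightarrow> s1 t m j) F"
  by (cases "j \<le> m") (auto simp: s1_def intro!: tendsto_intros)

lemma shiftmon_tendsto: "(f \<longlongrightarrow> x) F \<Longrightarrow> ((\<lambda>k. shiftmon (f k) \<alpha> \<beta>) \<longlongrightarrow> shiftmon x \<alpha> \<beta>) F"
  unfolding shiftmon_prod by (intro tendsto_prod s1_tendsto tendsto_vec_nth)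

context
  fixes p :: nat and X :: "(real^'n::finite) set" and F :: "'n mindex \<Rightarrow> real^'n \<Rightarrow> real"
  assumes wf: "whitney_field p X F"
begin

lemma rem_cont:
  assumes c: "c \<in> X" and al: "\<alpha> \<in> Mon p"
  shows "continuous (at (c,c) within X \<times> X) (\<lambda>(a,b). whitney_rem p F \<alpha> a b)"
proof -
  let ?S = "{(a, b). a \<in> X \<and> b \<in> X \<and> a \<noteq> b}"
  let ?D = "{(a, b). a \<in> X \<and> b \<in> X \<and> a = b}"
  have 1: "((\<lambda>(a,b). whitney_rem p F \<alpha> a b) \<longlongrightarrow> 0) (at (c,c) within ?S)"
    using wf c al unfolding whitney_field_def by blast
  have "eventually (\<lambda>x. (\<lambda>(a,b). whitney_rem p F \<alpha> a b) x = 0) (at (c,c) within ?D)"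
    unfolding eventually_at_filter by (rule always_eventually) (auto simp: whitney_rem_same)
  hence 2: "((\<lambda>(a,b). whitney_rem p F \<alpha> a b) \<longlongrightarrow> 0) (at (c,c) within ?D)"
    by (rule tendsto_eventually)
  have "X \<times> X = ?S \<union> ?D" by auto
  hence "((\<lambda>(a,b). whitney_rem p F \<alpha> a b) \<longlongrightarrow> 0) (at (c,c) within X \<times> X)"
    using Lim_Un[OF 1 2] by simp
  thus ?thesis unfolding continuous_within by (simp add: whitney_rem_same)
qed

lemma rem_seq:
  assumes c: "c \<in> X" and al: "\<alpha> \<in> Mon p" and AX: "\<And>k. A k \<in> X" and BX: "\<And>k. B k \<in> X"
    and A: "A \<longlonglongrightarrow> c" and B: "B \<longlonglongrightarrow> c"
  shows "(\<lambda>k. whitney_rem p F \<alpha> (A k) (B k)) \<longlonglongrightarrow> 0"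
proof -
  have "(\<lambda>k. (A k, B k)) \<longlonglongrightarrow> (c, c)" using A B by (rule tendsto_Pair)
  from continuous_within_tendsto_compose'[OF rem_cont[OF c al] _ this]
  show ?thesis using AX BX by (simp add: whitney_rem_same)
qed

lemma F_seq:
  assumes c: "c \<in> X" and al: "\<alpha> \<in> Mon p" and AX: "\<And>k. A k \<in> X" and A: "A \<longlonglongrightarrow> c"
  shows "(\<lambda>k. F \<alpha> (A k)) \<longlonglongrightarrow> F \<alpha> c"
proof -
  have r: "(\<lambda>k. whitney_rem p F \<alpha> c (A k)) \<longlonglongrightarrow> 0"
    using rem_seq[OF c al _ AX _ A] c by simp
  have d: "(\<lambda>k. A k - c) \<longlonglongrightarrow> c - c" using A by (intro tendsto_intros)
  have "(\<lambda>k. whitney_rem p F \<alpha> c (A k) * norm (A k - c)^(p - mdeg \<alpha>)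
     + (\<Sum>\<beta>\<in>Mon (p - mdeg \<alpha>). F (\<lambda>i. \<alpha> i + \<beta> i) c * mpow (A k - c) \<beta> / mfact \<beta>))
     \<longlonglongrightarrow> 0 * norm (c - c)^(p - mdeg \<alpha>)
     + (\<Sum>\<beta>\<in>Mon (p - mdeg \<alpha>). F (\<lambda>i. \<alpha> i + \<beta> i) c * mpow (c - c) \<beta> / mfact \<beta>)"
    by (intro tendsto_add tendsto_mult r tendsto_power tendsto_norm d tendsto_sum
        tendsto_divide tendsto_const mpow_tendsto) (simp add: mfact_def)
  moreover have "(\<Sum>\<beta>\<in>Mon (p - mdeg \<alpha>). F (\<lambda>i. \<alpha> i + \<beta> i) c * mpow (c - c) \<beta> / mfact \<beta>) = F \<alpha> c"
    by (rule sum_zero_term')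
  moreover have "\<And>k. F \<alpha> (A k) = whitney_rem p F \<alpha> c (A k) * norm (A k - c)^(p - mdeg \<alpha>)
     + (\<Sum>\<beta>\<in>Mon (p - mdeg \<alpha>). F (\<lambda>i. \<alpha> i + \<beta> i) c * mpow (A k - c) \<beta> / mfact \<beta>)"
    by (rule F_expand)
  ultimately show ?thesis by simp
qed

lemma G_tendsto:
  assumes c: "c \<in> X" and AX: "\<And>k. A k \<in> X" and A: "A \<longlonglongrightarrow> c" and Z: "Z \<longlonglongrightarrow> \<xi>"
  shows "(\<lambda>k. dapp p (Z k) (taylor p F (A k))) \<longlonglongrightarrow> dapp p \<xi> (taylor p F c)"
  unfolding dapp_def taylor_def
  by (intro tendsto_sum tendsto_mult coord_tendsto[OF Z] F_seq[OF c _ AX A] shiftmon_tendsto[OF A])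
     simp

lemma main_lim:
  assumes c: "c \<in> X" and AX: "\<And>k. A k \<in> X" and BX: "\<And>k. B k \<in> X"
    and A: "A \<longlonglongrightarrow> c" and B: "B \<longlonglongrightarrow> c"
    and Z: "(\<lambda>k. (\<lambda>\<alpha>. Xi k \<alpha> + Eta k \<alpha>)) \<longlonglongrightarrow> \<xi>"
    and sm: "\<And>k. small p (A k) (B k) (Eta k)"
  shows "(\<lambda>k. dapp p (Xi k) (taylor p F (A k)) + dapp p (Eta k) (taylor p F (B k)))
           \<longlonglongrightarrow> dapp p \<xi> (taylor p F c)"
proof -
  define R where "R k = (\<Sum>\<alpha>\<in>Mon p. \<bar>whitney_rem p F \<alpha> (A k) (B k)\<bar>)" for k
  have R0: "R \<longlonglongrightarrow> 0"
  proof -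
    have "R \<longlonglongrightarrow> (\<Sum>\<alpha>\<in>(Mon p :: 'n mindex set). 0)" unfolding R_def
      by (intro tendsto_sum tendsto_rabs_zero rem_seq[OF c _ AX BX A B])
    thus ?thesis by simp
  qed
  have bound: "norm (dapp p (Eta k) (taylor p F (B k)) - dapp p (Eta k) (taylor p F (A k))) \<le> R k" for k
  proof -
    have "norm (dapp p (Eta k) (taylor p F (B k)) - dapp p (Eta k) (taylor p F (A k)))
       = \<bar>\<Sum>\<alpha>\<in>Mon p. whitney_rem p F \<alpha> (A k) (B k) * norm (B k - A k)^(p - mdeg \<alpha>) * dcomp p (Eta k) \<alpha> (B k)\<bar>"
      by (simp only: dapp_diff real_norm_def)
    also have "\<dots> \<le> (\<Sum>\<alpha>\<in>Mon p. \<bar>whitney_rem p F \<alpha> (A k) (B k) * norm (B k - A k)^(p - mdeg \<alpha>) * dcomp p (Eta k) \<alpha> (B k)\<bar>)"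
      by (rule sum_abs)
    also have "\<dots> \<le> R k" unfolding R_def
    proof (rule sum_mono)
      fix \<alpha> :: "'n mindex" assume al: "\<alpha> \<in> Mon p"
      have "norm (A k - B k)^(p - mdeg \<alpha>) * \<bar>dcomp p (Eta k) \<alpha> (B k)\<bar> \<le> 1"
        using sm[of k] al unfolding small_def by blast
      hence s: "norm (B k - A k)^(p - mdeg \<alpha>) * \<bar>dcomp p (Eta k) \<alpha> (B k)\<bar> \<le> 1"
        by (simp add: norm_minus_commute)
      have "\<bar>whitney_rem p F \<alpha> (A k) (B k) * norm (B k - A k)^(p - mdeg \<alpha>) * dcomp p (Eta k) \<alpha> (B k)\<bar>
          = \<bar>whitney_rem p F \<alpha> (A k) (B k)\<bar> * (norm (B k - A k)^(p - mdeg \<alpha>) * \<bar>dcomp p (Eta k) \<alpha> (B k)\<bar>)"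
        by (simp add: abs_mult mult_ac)
      also have "\<dots> \<le> \<bar>whitney_rem p F \<alpha> (A k) (B k)\<bar> * 1"
        by (rule mult_left_mono[OF s]) simp
      finally show "\<bar>whitney_rem p F \<alpha> (A k) (B k) * norm (B k - A k)^(p - mdeg \<alpha>) * dcomp p (Eta k) \<alpha> (B k)\<bar>
          \<le> \<bar>whitney_rem p F \<alpha> (A k) (B k)\<bar>" by simp
    qed
    finally show ?thesis .
  qed
  have D0: "(\<lambda>k. dapp p (Eta k) (taylor p F (B k)) - dapp p (Eta k) (taylor p F (A k))) \<longlonglongrightarrow> 0"
    by (rule Lim_null_comparison[OF always_eventually R0]) (use bound in blast)
  have G1: "(\<lambda>k. dapp p (\<lambda>\<alpha>. Xi k \<alpha> + Eta k \<alpha>) (taylor p F (A k))) \<longlonglongrightarrow> dapp p \<xi> (taylor p F c)"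
    by (rule G_tendsto[OF c AX A Z])
  have "(\<lambda>k. dapp p (\<lambda>\<alpha>. Xi k \<alpha> + Eta k \<alpha>) (taylor p F (A k))
      + (dapp p (Eta k) (taylor p F (B k)) - dapp p (Eta k) (taylor p F (A k))))
      \<longlonglongrightarrow> dapp p \<xi> (taylor p F c) + 0"
    by (rule tendsto_add[OF G1 D0])
  thus ?thesis by (simp add: dapp_add)
qed

end



lemma spanDR_graph:
  fixes g :: "('n::finite) dualp \<Rightarrow> real"
  assumes lin: "\<And>I r. finite I \<Longrightarrow> g (\<lambda>\<alpha>. \<Sum>u\<in>I. r u * u \<alpha>) = (\<Sum>u\<in>I. r u * g u)"
  shows "spanDR ((\<lambda>\<xi>. (\<xi>, g \<xi>)) ` S) = (\<lambda>v. (v, g v)) ` spanD S"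
proof (intro set_eqI iffI)
  fix x assume "x \<in> spanDR ((\<lambda>\<xi>. (\<xi>, g \<xi>)) ` S)"
  then obtain I r where fI: "finite I" and IS: "I \<subseteq> (\<lambda>\<xi>. (\<xi>, g \<xi>)) ` S"
    and x: "x = ((\<lambda>\<alpha>. \<Sum>u\<in>I. r u * fst u \<alpha>), (\<Sum>u\<in>I. r u * snd u))"
    unfolding spanDR_def by blast
  have uI: "u = (fst u, g (fst u))" if "u \<in> I" for u using IS that by auto
  have inj: "inj_on fst I"
  proof (rule inj_onI)
    fix u v assume "u \<in> I" "v \<in> I" "fst u = fst v"
    thus "u = v" using uI by metis
  qed
  define J where "J = fst ` I"
  define r' where "r' \<xi> = r (\<xi>, g \<xi>)" for \<xi>
  have fJ: "finite J" using fI unfolding J_def by simp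
  have JS: "J \<subseteq> S" using IS unfolding J_def by auto
  have e1: "(\<Sum>u\<in>I. r u * fst u \<alpha>) = (\<Sum>\<xi>\<in>J. r' \<xi> * \<xi> \<alpha>)" for \<alpha>
    unfolding J_def sum.reindex[OF inj] r'_def o_def
    by (rule sum.cong[OF refl]) (metis uI)
  have "(\<Sum>u\<in>I. r u * snd u) = (\<Sum>\<xi>\<in>J. r' \<xi> * g \<xi>)"
    unfolding J_def sum.reindex[OF inj] r'_def o_def
    by (rule sum.cong[OF refl]) (metis uI snd_conv)
  also have "\<dots> = g (\<lambda>\<alpha>. \<Sum>\<xi>\<in>J. r' \<xi> * \<xi> \<alpha>)" by (rule lin[OF fJ, symmetric])
  finally have e2: "(\<Sum>u\<in>I. r u * snd u) = g (\<lambda>\<alpha>. \<Sum>\<xi>\<in>J. r' \<xi> * \<xi> \<alpha>)" .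
  have "(\<lambda>\<alpha>. \<Sum>\<xi>\<in>J. r' \<xi> * \<xi> \<alpha>) \<in> spanD S" unfolding spanD_def using fJ JS by blast
  moreover have "x = (\<lambda>v. (v, g v)) (\<lambda>\<alpha>. \<Sum>\<xi>\<in>J. r' \<xi> * \<xi> \<alpha>)" unfolding x e1 e2 by simp
  ultimately show "x \<in> (\<lambda>v. (v, g v)) ` spanD S" by blast
next
  fix x assume "x \<in> (\<lambda>v. (v, g v)) ` spanD S"
  then obtain J r where fJ: "finite J" and JS: "J \<subseteq> S"
    and x: "x = (\<lambda>v. (v, g v)) (\<lambda>\<alpha>. \<Sum>\<xi>\<in>J. r \<xi> * \<xi> \<alpha>)"
    unfolding spanD_def by blast
  define I where "I = (\<lambda>\<xi>. (\<xi>, g \<xi>)) ` J"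
  define r' where "r' u = r (fst u)" for u :: "'n dualp \<times> real"
  have inj: "inj_on (\<lambda>\<xi>. (\<xi>, g \<xi>)) J" by (rule inj_onI) simp
  have fI: "finite I" using fJ unfolding I_def by simp
  have IS: "I \<subseteq> (\<lambda>\<xi>. (\<xi>, g \<xi>)) ` S" using JS unfolding I_def by auto
  have e1: "(\<Sum>u\<in>I. r' u * fst u \<alpha>) = (\<Sum>\<xi>\<in>J. r \<xi> * \<xi> \<alpha>)" for \<alpha>
    unfolding I_def sum.reindex[OF inj] r'_def o_def by simp
  have "(\<Sum>u\<in>I. r' u * snd u) = (\<Sum>\<xi>\<in>J. r \<xi> * g \<xi>)"
    unfolding I_def sum.reindex[OF inj] r'_def o_def by simp
  also have "\<dots> = g (\<lambda>\<alpha>. \<Sum>\<xi>\<in>J. r \<xi> * \<xi> \<alpha>)" by (rule lin[OF fJ, symmetric])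
  finally have e2: "(\<Sum>u\<in>I. r' u * snd u) = g (\<lambda>\<alpha>. \<Sum>\<xi>\<in>J. r \<xi> * \<xi> \<alpha>)" .
  have "x = ((\<lambda>\<alpha>. \<Sum>u\<in>I. r' u * fst u \<alpha>), (\<Sum>u\<in>I. r' u * snd u))"
    unfolding x e1 e2 by simp
  thus "x \<in> spanDR ((\<lambda>\<xi>. (\<xi>, g \<xi>)) ` S)" unfolding spanDR_def using fI IS by blast
qed

context
  fixes p :: nat and X :: "(real^'n::finite) set" and F :: "'n mindex \<Rightarrow> real^'n \<Rightarrow> real"
  assumes wf: "whitney_field p X F"
begin

lemma prime_graph:
  assumes Phi: "\<Phi> = {(a, \<xi>, dapp p \<xi> (taylor p F a)) | a \<xi>. (a, \<xi>) \<in> E}"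
  shows "primePhi p X \<Phi> = {(a, \<xi>, dapp p \<xi> (taylor p F a)) | a \<xi>. (a, \<xi>) \<in> primeE p X E}"
proof (intro set_eqI iffI)
  have memPhi: "(a, \<xi>, l) \<in> \<Phi> \<longleftrightarrow> (a, \<xi>) \<in> E \<and> l = dapp p \<xi> (taylor p F a)" for a \<xi> l
    using Phi by auto
  fix x assume "x \<in> primePhi p X \<Phi>"
  then obtain a \<xi> l where x: "x = (a, \<xi>, l)" and aX: "a \<in> X" and xd: "\<xi> \<in> Dual p"
    and cl: "(a, a, \<xi>, l) \<in> closure (DeltaPhi p X \<Phi>)"
    unfolding primePhi_def by auto
  obtain s where sD: "\<forall>n. s n \<in> DeltaPhi p X \<Phi>" and sl: "s \<longlonglongrightarrow> (a, a, \<xi>, l)"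
    using cl[unfolded closure_sequential] by blast
  define P where "P n a' b' \<xi>' \<eta>' \<longleftrightarrow> s n = (a', b', \<lambda>\<alpha>. \<xi>' \<alpha> + \<eta>' \<alpha>, dapp p \<xi>' (taylor p F a') + dapp p \<eta>' (taylor p F b'))
      \<and> a' \<in> X \<and> b' \<in> X \<and> (a', \<xi>') \<in> E \<and> (b', \<eta>') \<in> E \<and> small p a' b' \<eta>'" for n a' b' \<xi>' \<eta>'
  have "\<forall>n. \<exists>a' b' \<xi>' \<eta>'. P n a' b' \<xi>' \<eta>'"
  proof
    fix n
    from sD[rule_format, of n] obtain a' b' \<xi>' l' \<eta>' m' where
      sn: "s n = (a', b', \<lambda>\<alpha>. \<xi>' \<alpha> + \<eta>' \<alpha>, l' + m')" and h: "a' \<in> X" "b' \<in> X"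
      and p1: "(a', \<xi>', l') \<in> \<Phi>" and p2: "(b', \<eta>', m') \<in> \<Phi>" and h2: "small p a' b' \<eta>'"
      unfolding DeltaPhi_def by blast
    from p1 have e1: "(a', \<xi>') \<in> E" "l' = dapp p \<xi>' (taylor p F a')" using memPhi by blast+
    from p2 have e2: "(b', \<eta>') \<in> E" "m' = dapp p \<eta>' (taylor p F b')" using memPhi by blast+
    hence "P n a' b' \<xi>' \<eta>'" unfolding P_def using sn h h2 e1 e2 by simp
    thus "\<exists>a' b' \<xi>' \<eta>'. P n a' b' \<xi>' \<eta>'" by blast
  qed
  then have "\<exists>A. \<forall>n. \<exists>b' \<xi>' \<eta>'. P n (A n) b' \<xi>' \<eta>'" by (rule choice)
  then obtain A where "\<forall>n. \<exists>b' \<xi>' \<eta>'. P n (A n) b' \<xi>' \<eta>'" ..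
  then have "\<exists>B. \<forall>n. \<exists>\<xi>' \<eta>'. P n (A n) (B n) \<xi>' \<eta>'" by (rule choice)
  then obtain B where "\<forall>n. \<exists>\<xi>' \<eta>'. P n (A n) (B n) \<xi>' \<eta>'" ..
  then have "\<exists>Xi. \<forall>n. \<exists>\<eta>'. P n (A n) (B n) (Xi n) \<eta>'" by (rule choice)
  then obtain Xi where "\<forall>n. \<exists>\<eta>'. P n (A n) (B n) (Xi n) \<eta>'" ..
  then have "\<exists>Eta. \<forall>n. P n (A n) (B n) (Xi n) (Eta n)" by (rule choice)
  then obtain Eta where PP: "\<forall>n. P n (A n) (B n) (Xi n) (Eta n)" ..
  have H: "\<And>n. s n = (A n, B n, \<lambda>\<alpha>. Xi n \<alpha> + Eta n \<alpha>,
        dapp p (Xi n) (taylor p F (A n)) + dapp p (Eta n) (taylor p F (B n)))"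
    and AX: "\<And>n. A n \<in> X" and BX: "\<And>n. B n \<in> X" and AE: "\<And>n. (A n, Xi n) \<in> E"
    and BE: "\<And>n. (B n, Eta n) \<in> E" and sm: "\<And>n. small p (A n) (B n) (Eta n)"
    using PP unfolding P_def by simp_all
  have "(\<lambda>n. fst (s n)) \<longlonglongrightarrow> a" using tendsto_fst[OF sl] by simp
  hence A: "A \<longlonglongrightarrow> a" by (simp add: H)
  have "(\<lambda>n. fst (snd (s n))) \<longlonglongrightarrow> a" using tendsto_fst[OF tendsto_snd[OF sl]] by simp
  hence B: "B \<longlonglongrightarrow> a" by (simp add: H)
  have "(\<lambda>n. fst (snd (snd (s n)))) \<longlonglongrightarrow> \<xi>" using tendsto_fst[OF tendsto_snd[OF tendsto_snd[OF sl]]] by simp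
  hence Z: "(\<lambda>n. \<lambda>\<alpha>. Xi n \<alpha> + Eta n \<alpha>) \<longlonglongrightarrow> \<xi>" by (simp add: H)
  have "(\<lambda>n. snd (snd (snd (s n)))) \<longlonglongrightarrow> l" using tendsto_snd[OF tendsto_snd[OF tendsto_snd[OF sl]]] by simp
  hence V: "(\<lambda>n. dapp p (Xi n) (taylor p F (A n)) + dapp p (Eta n) (taylor p F (B n))) \<longlonglongrightarrow> l"
    by (simp add: H)
  have V': "(\<lambda>n. dapp p (Xi n) (taylor p F (A n)) + dapp p (Eta n) (taylor p F (B n)))
      \<longlonglongrightarrow> dapp p \<xi> (taylor p F a)"
    by (rule main_lim[OF wf aX AX BX A B Z sm])
  have l: "l = dapp p \<xi> (taylor p F a)" using LIMSEQ_unique[OF V V'] .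
  have "(a, a, \<xi>) \<in> closure (DeltaE p X E)"
    unfolding closure_sequential
  proof (intro exI conjI allI)
    fix n show "(A n, B n, \<lambda>\<alpha>. Xi n \<alpha> + Eta n \<alpha>) \<in> DeltaE p X E"
      unfolding DeltaE_def using AX BX AE BE sm by blast
  next
    show "(\<lambda>n. (A n, B n, \<lambda>\<alpha>. Xi n \<alpha> + Eta n \<alpha>)) \<longlonglongrightarrow> (a, a, \<xi>)"
      by (intro tendsto_Pair A B Z)
  qed
  hence "(a, \<xi>) \<in> primeE p X E" unfolding primeE_def using aX xd by blast
  thus "x \<in> {(a, \<xi>, dapp p \<xi> (taylor p F a)) | a \<xi>. (a, \<xi>) \<in> primeE p X E}" using x l by blast
next
  have memPhi: "(a, \<xi>, l) \<in> \<Phi> \<longleftrightarrow> (a, \<xi>) \<in> E \<and> l = dapp p \<xi> (taylor p F a)" for a \<xi> l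
    using Phi by auto
  fix x assume "x \<in> {(a, \<xi>, dapp p \<xi> (taylor p F a)) | a \<xi>. (a, \<xi>) \<in> primeE p X E}"
  then obtain a \<xi> where x: "x = (a, \<xi>, dapp p \<xi> (taylor p F a))" and aX: "a \<in> X" and xd: "\<xi> \<in> Dual p"
    and cl: "(a, a, \<xi>) \<in> closure (DeltaE p X E)"
    unfolding primeE_def by auto
  obtain t where tD: "\<forall>n. t n \<in> DeltaE p X E" and tl: "t \<longlonglongrightarrow> (a, a, \<xi>)"
    using cl[unfolded closure_sequential] by blast
  define P where "P n a' b' \<xi>' \<eta>' \<longleftrightarrow> t n = (a', b', \<lambda>\<alpha>. \<xi>' \<alpha> + \<eta>' \<alpha>)
      \<and> a' \<in> X \<and> b' \<in> X \<and> (a', \<xi>') \<in> E \<and> (b', \<eta>') \<in> E \<and> small p a' b' \<eta>'" for n a' b' \<xi>' \<eta>'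
  have "\<forall>n. \<exists>a' b' \<xi>' \<eta>'. P n a' b' \<xi>' \<eta>'"
  proof
    fix n
    from tD[rule_format, of n] obtain a' b' \<xi>' \<eta>' where "t n = (a', b', \<lambda>\<alpha>. \<xi>' \<alpha> + \<eta>' \<alpha>)"
      "a' \<in> X" "b' \<in> X" "(a', \<xi>') \<in> E" "(b', \<eta>') \<in> E" "small p a' b' \<eta>'"
      unfolding DeltaE_def by blast
    hence "P n a' b' \<xi>' \<eta>'" unfolding P_def by simp
    thus "\<exists>a' b' \<xi>' \<eta>'. P n a' b' \<xi>' \<eta>'" by blast
  qed
  then have "\<exists>A. \<forall>n. \<exists>b' \<xi>' \<eta>'. P n (A n) b' \<xi>' \<eta>'" by (rule choice)
  then obtain A where "\<forall>n. \<exists>b' \<xi>' \<eta>'. P n (A n) b' \<xi>' \<eta>'" ..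
  then have "\<exists>B. \<forall>n. \<exists>\<xi>' \<eta>'. P n (A n) (B n) \<xi>' \<eta>'" by (rule choice)
  then obtain B where "\<forall>n. \<exists>\<xi>' \<eta>'. P n (A n) (B n) \<xi>' \<eta>'" ..
  then have "\<exists>Xi. \<forall>n. \<exists>\<eta>'. P n (A n) (B n) (Xi n) \<eta>'" by (rule choice)
  then obtain Xi where "\<forall>n. \<exists>\<eta>'. P n (A n) (B n) (Xi n) \<eta>'" ..
  then have "\<exists>Eta. \<forall>n. P n (A n) (B n) (Xi n) (Eta n)" by (rule choice)
  then obtain Eta where PP: "\<forall>n. P n (A n) (B n) (Xi n) (Eta n)" ..
  have H: "\<And>n. t n = (A n, B n, \<lambda>\<alpha>. Xi n \<alpha> + Eta n \<alpha>)"
    and AX: "\<And>n. A n \<in> X" and BX: "\<And>n. B n \<in> X" and AE: "\<And>n. (A n, Xi n) \<in> E"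
    and BE: "\<And>n. (B n, Eta n) \<in> E" and sm: "\<And>n. small p (A n) (B n) (Eta n)"
    using PP unfolding P_def by simp_all
  have "(\<lambda>n. fst (t n)) \<longlonglongrightarrow> a" using tendsto_fst[OF tl] by simp
  hence A: "A \<longlonglongrightarrow> a" by (simp add: H)
  have "(\<lambda>n. fst (snd (t n))) \<longlonglongrightarrow> a" using tendsto_fst[OF tendsto_snd[OF tl]] by simp
  hence B: "B \<longlonglongrightarrow> a" by (simp add: H)
  have "(\<lambda>n. snd (snd (t n))) \<longlonglongrightarrow> \<xi>" using tendsto_snd[OF tendsto_snd[OF tl]] by simp
  hence Z: "(\<lambda>n. \<lambda>\<alpha>. Xi n \<alpha> + Eta n \<alpha>) \<longlonglongrightarrow> \<xi>" by (simp add: H)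
  have V': "(\<lambda>n. dapp p (Xi n) (taylor p F (A n)) + dapp p (Eta n) (taylor p F (B n)))
      \<longlonglongrightarrow> dapp p \<xi> (taylor p F a)"
    by (rule main_lim[OF wf aX AX BX A B Z sm])
  have "(a, a, \<xi>, dapp p \<xi> (taylor p F a)) \<in> closure (DeltaPhi p X \<Phi>)"
    unfolding closure_sequential
  proof (intro exI conjI allI)
    fix n
    have "(A n, Xi n, dapp p (Xi n) (taylor p F (A n))) \<in> \<Phi>" using AE memPhi by blast
    moreover have "(B n, Eta n, dapp p (Eta n) (taylor p F (B n))) \<in> \<Phi>" using BE memPhi by blast
    ultimately show "(A n, B n, \<lambda>\<alpha>. Xi n \<alpha> + Eta n \<alpha>,
        dapp p (Xi n) (taylor p F (A n)) + dapp p (Eta n) (taylor p F (B n))) \<in> DeltaPhi p X \<Phi>"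
      unfolding DeltaPhi_def using AX BX sm by blast
  next
    show "(\<lambda>n. (A n, B n, \<lambda>\<alpha>. Xi n \<alpha> + Eta n \<alpha>,
        dapp p (Xi n) (taylor p F (A n)) + dapp p (Eta n) (taylor p F (B n))))
        \<longlonglongrightarrow> (a, a, \<xi>, dapp p \<xi> (taylor p F a))"
      by (intro tendsto_Pair A B Z V')
  qed
  thus "x \<in> primePhi p X \<Phi>" unfolding primePhi_def using x aX xd by blast
qed

lemma rho_graph:
  assumes Phi: "\<Phi> = {(a, \<xi>, dapp p \<xi> (taylor p F a)) | a \<xi>. (a, \<xi>) \<in> E}"
  shows "rhoPhi p X \<Phi> = {(a, \<xi>, dapp p \<xi> (taylor p F a)) | a \<xi>. (a, \<xi>) \<in> rhoE p X E}"
proof -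
  have fib: "{w. (a, w) \<in> primePhi p X \<Phi>} = (\<lambda>\<xi>. (\<xi>, dapp p \<xi> (taylor p F a))) ` {\<xi>. (a, \<xi>) \<in> primeE p X E}" for a
    unfolding prime_graph[OF Phi] by auto
  have sp: "spanDR {w. (a, w) \<in> primePhi p X \<Phi>} = (\<lambda>v. (v, dapp p v (taylor p F a))) ` spanD {\<xi>. (a, \<xi>) \<in> primeE p X E}" for a
    unfolding fib by (rule spanDR_graph) (rule dapp_lincomb)
  show ?thesis
    unfolding rhoPhi_def rhoE_def sp by auto
qed

lemma all_graph:
  assumes f: "\<forall>x\<in>X. F (\<lambda>_. 0) x = f x"
  shows "(rhoPhi p X ^^ i) (Phi0 p X f) = {(a, \<xi>, dapp p \<xi> (taylor p F a)) | a \<xi>. (a, \<xi>) \<in> (rhoE p X ^^ i) (E0 p X)}"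
proof (induction i)
  case 0
  have "Phi0 p X f = {(a, \<xi>, dapp p \<xi> (taylor p F a)) | a \<xi>. (a, \<xi>) \<in> E0 p X}"
  proof (intro set_eqI iffI)
    fix x assume "x \<in> Phi0 p X f"
    then obtain a c where x: "x = (a, (\<lambda>\<alpha>. c * deltaP p a \<alpha>), c * f a)" and aX: "a \<in> X"
      unfolding Phi0_def by blast
    have "dapp p (\<lambda>\<alpha>. c * deltaP p a \<alpha>) (taylor p F a) = c * f a"
      unfolding dapp_scale dapp_delta_taylor using f aX by simp
    moreover have "(a, (\<lambda>\<alpha>. c * deltaP p a \<alpha>)) \<in> E0 p X" unfolding E0_def using aX by blast
    ultimately show "x \<in> {(a, \<xi>, dapp p \<xi> (taylor p F a)) | a \<xi>. (a, \<xi>) \<in> E0 p X}" using x by force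
  next
    fix x assume "x \<in> {(a, \<xi>, dapp p \<xi> (taylor p F a)) | a \<xi>. (a, \<xi>) \<in> E0 p X}"
    then obtain a c where x: "x = (a, (\<lambda>\<alpha>. c * deltaP p a \<alpha>), dapp p (\<lambda>\<alpha>. c * deltaP p a \<alpha>) (taylor p F a))"
      and aX: "a \<in> X"
      unfolding E0_def by blast
    have "dapp p (\<lambda>\<alpha>. c * deltaP p a \<alpha>) (taylor p F a) = c * f a"
      unfolding dapp_scale dapp_delta_taylor using f aX by simp
    thus "x \<in> Phi0 p X f" unfolding Phi0_def using x aX by auto
  qed
  thus ?case by simp
next
  case (Suc i)
  show ?case unfolding funpow.simps o_def Suc.IH[symmetric]
    by (rule rho_graph) (rule Suc.IH)
qed

end

theorem lemma4p17:
  fixes X U :: "(real^'n::finite) set" and f :: "real^'n \<Rightarrow> real" and p :: nat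
    and F :: "'n mindex \<Rightarrow> real^'n \<Rightarrow> real"
  assumes "open U" and "X \<subseteq> U" and "closedin (top_of_set U) X"
    and "whitney_field p X F" and "\<forall>x\<in>X. F (\<lambda>_. 0) x = f x"
  shows "(\<forall>a \<xi> t. (a, \<xi>, t) \<in> (rhoPhi p X ^^ i) (Phi0 p X f) \<longrightarrow> (a, \<xi>) \<in> (rhoE p X ^^ i) (E0 p X))
       \<and> (\<forall>a\<in>X. \<forall>\<xi>. (a, \<xi>) \<in> (rhoE p X ^^ i) (E0 p X) \<longrightarrow>
            (\<exists>!t. (a, \<xi>, t) \<in> (rhoPhi p X ^^ i) (Phi0 p X f))
          \<and> (a, \<xi>, dapp p \<xi> (taylor p F a)) \<in> (rhoPhi p X ^^ i) (Phi0 p X f))"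
proof -
  have G: "(rhoPhi p X ^^ i) (Phi0 p X f) = {(a, \<xi>, dapp p \<xi> (taylor p F a)) | a \<xi>. (a, \<xi>) \<in> (rhoE p X ^^ i) (E0 p X)}"
    by (rule all_graph[OF assms(4) assms(5)])
  show ?thesis unfolding G by auto
qed


end
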